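(* Let $f: S^1 \rightarrow S^1$ be a Morse-Smale diffeomorphism. Then the topological entropy of the induced continuum map $C(f): C(S^1)\to C(S^1)$ is zero.
   Context: A $C^r$ diffeomorphism ($r\ge1$) is Morse-Smale if its nonwandering set consists of finitely many periodic points, all hyperbolic, with mutually transversal stable and unstable manifolds. $C(S^1)$ is the hyperspace of nonempty compact connected subsets of $S^1$ with the Hausdorff metric and $C(f)(A)=f(A)$. *)

theory Defs
  imports "HOL-Analysis.Analysis"
begin

definition S1 :: "complex set" where
  "S1 = sphere 0 1"

text \<open>A map of the circle (given as a map on complex numbers, of which only the
restriction to S1 matters) is C^1 if it maps S1 into S1 and its composition with
the standard parametrisation t \<mapsto> cis t is a C^1 curve in the plane.\<close>
definition C1_circle_map :: "(complex \<Rightarrow> complex) \<Rightarrow> bool" where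
  "C1_circle_map h \<longleftrightarrow> h ` S1 \<subseteq> S1 \<and>
     (\<exists>h'. continuous_on UNIV h' \<and>
        (\<forall>t. ((\<lambda>s. h (cis s)) has_vector_derivative h' t) (at t)))"

definition C1_circle_diffeo :: "(complex \<Rightarrow> complex) \<Rightarrow> bool" where
  "C1_circle_diffeo f \<longleftrightarrow> bij_betw f S1 S1 \<and> C1_circle_map f \<and>
     C1_circle_map (inv_into S1 f)"

definition periodic_points :: "(complex \<Rightarrow> complex) \<Rightarrow> complex set" where
  "periodic_points f = {x \<in> S1. \<exists>n>0. (f ^^ n) x = x}"

text \<open>A periodic point p is hyperbolic if for its periods n the derivative of
f^n at p (the linear map T_p S1 \<rightarrow> T_p S1) has absolute value \<noteq> 1. In the
parametrisation by cis, the absolute value of this multiplier is the speed of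
the curve s \<mapsto> f^n(cis s) at a parameter t with cis t = p.\<close>
definition hyperbolic_periodic_point :: "(complex \<Rightarrow> complex) \<Rightarrow> complex \<Rightarrow> bool" where
  "hyperbolic_periodic_point f p \<longleftrightarrow> p \<in> periodic_points f \<and>
     (\<forall>n>0. (f ^^ n) p = p \<longrightarrow>
        (\<forall>t D. cis t = p \<longrightarrow>
           ((\<lambda>s. (f ^^ n) (cis s)) has_vector_derivative D) (at t) \<longrightarrow> norm D \<noteq> 1))"

definition nonwandering_set :: "(complex \<Rightarrow> complex) \<Rightarrow> complex set" where
  "nonwandering_set f = {x \<in> S1. \<forall>U. openin (top_of_set S1) U \<and> x \<in> U \<longrightarrow>
       (\<exists>n>0. (f ^^ n) ` U \<inter> U \<noteq> {})}"

definition stable_set :: "(complex \<Rightarrow> complex) \<Rightarrow> complex \<Rightarrow> complex set" where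
  "stable_set f p = {x \<in> S1. (\<lambda>k. dist ((f ^^ k) x) ((f ^^ k) p)) \<longlonglongrightarrow> 0}"

definition unstable_set :: "(complex \<Rightarrow> complex) \<Rightarrow> complex \<Rightarrow> complex set" where
  "unstable_set f p = stable_set (inv_into S1 f) p"

text \<open>Transversality of W^s(p) and W^u(q) in the one-dimensional manifold S1:
at every intersection point x the tangent spaces span T_x S1. The invariant
manifolds of a hyperbolic periodic point of a circle diffeomorphism are either
a single point (tangent space 0) or an open subset of S1 (tangent space T_x S1),
so the condition says that x is a relative interior point of one of them.\<close>
definition transversal :: "complex set \<Rightarrow> complex set \<Rightarrow> bool" where
  "transversal W V \<longleftrightarrow> (\<forall>x \<in> W \<inter> V.
      (\<exists>U. openin (top_of_set S1) U \<and> x \<in> U \<and> U \<subseteq> W) \<or>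
      (\<exists>U. openin (top_of_set S1) U \<and> x \<in> U \<and> U \<subseteq> V))"

definition morse_smale_circle :: "(complex \<Rightarrow> complex) \<Rightarrow> bool" where
  "morse_smale_circle f \<longleftrightarrow> C1_circle_diffeo f \<and>
     nonwandering_set f = periodic_points f \<and>
     finite (periodic_points f) \<and>
     (\<forall>p \<in> periodic_points f. hyperbolic_periodic_point f p) \<and>
     (\<forall>p \<in> periodic_points f. \<forall>q \<in> periodic_points f.
        transversal (stable_set f p) (unstable_set f q))"

definition hausdorff_dist :: "'a::metric_space set \<Rightarrow> 'a set \<Rightarrow> real" where
  "hausdorff_dist A B = max (SUP a\<in>A. infdist a B) (SUP b\<in>B. infdist b A)"

definition continua_S1 :: "complex set set" where
  "continua_S1 = {A. A \<noteq> {} \<and> A \<subseteq> S1 \<and> compact A \<and> connected A}"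

definition separated_set ::
  "('b \<Rightarrow> 'b \<Rightarrow> real) \<Rightarrow> ('b \<Rightarrow> 'b) \<Rightarrow> 'b set \<Rightarrow> nat \<Rightarrow> real \<Rightarrow> 'b set \<Rightarrow> bool" where
  "separated_set d T X n \<epsilon> E \<longleftrightarrow> E \<subseteq> X \<and>
     (\<forall>x\<in>E. \<forall>y\<in>E. x \<noteq> y \<longrightarrow> (\<exists>k<n. d ((T ^^ k) x) ((T ^^ k) y) > \<epsilon>))"

definition topological_entropy ::
  "('b \<Rightarrow> 'b \<Rightarrow> real) \<Rightarrow> ('b \<Rightarrow> 'b) \<Rightarrow> 'b set \<Rightarrow> ereal" where
  "topological_entropy d T X =
     (SUP \<epsilon>\<in>{0<..}. limsup (\<lambda>n.
        SUP E\<in>{E. finite E \<and> separated_set d T X n \<epsilon> E}. ereal (ln (real (card E)) / real n)))"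

end

theory Submission
  imports Defs "HOL-Real_Asymp.Real_Asymp"
begin

definition phi :: "complex \<Rightarrow> complex \<Rightarrow> real" where
  "phi z x = Arg (- x / z)"
definition psi :: "complex \<Rightarrow> real \<Rightarrow> complex" where
  "psi z t = - z * cis t"

lemma S1_iff: "x \<in> S1 \<longleftrightarrow> norm x = 1"
  by (simp add: S1_def)

lemma cis_Arg_norm1: assumes "norm w = 1" shows "cis (Arg w) = w"
proof -
  have "w \<noteq> 0" using assms by auto
  then show ?thesis using cis_Arg[of w] assms by (simp add: sgn_div_norm)
qed

lemma psi_phi: "z \<in> S1 \<Longrightarrow> x \<in> S1 \<Longrightarrow> psi z (phi z x) = x"
  unfolding psi_def phi_def S1_iff
  by (subst cis_Arg_norm1) (auto simp: norm_divide)

lemma psi_S1: "z \<in> S1 \<Longrightarrow> psi z t \<in> S1"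
  by (simp add: psi_def S1_iff norm_mult)

lemma unit_nonpos_real: fixes w :: complex assumes "norm w = 1" "w \<in> \<real>\<^sub>\<le>\<^sub>0" shows "w = -1"
proof -
  obtain r where r: "w = of_real r" "r \<le> 0" using assms(2) nonpos_Reals_cases by blast
  then have "\<bar>r\<bar> = 1" using assms(1) by (simp add: norm_of_real)
  then show ?thesis using r by simp
qed

lemma neg1_imp_eq: assumes "z \<in> S1" "- x / z = -1" shows "x = z"
proof -
  have "z \<noteq> 0" using assms by (auto simp: S1_iff)
  then have "x = - (- x / z) * z" by simp
  then show ?thesis using assms(2) by simp
qed

lemma phi_bounds: assumes "z \<in> S1" "x \<in> S1" "x \<noteq> z" shows "- pi < phi z x \<and> phi z x < pi"
proof -
  have n: "norm (- x / z) = 1" using assms by (simp add: S1_iff norm_divide)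
  have "Arg (- x / z) \<noteq> pi"
  proof
    assume "Arg (- x / z) = pi"
    then have "- x / z \<in> \<real>\<^sub>\<le>\<^sub>0" unfolding Arg_eq_pi_iff
      by (simp add: complex_nonpos_Reals_iff complex_is_Real_iff)
    then have "- x / z = -1" using unit_nonpos_real n by blast
    then show False using assms neg1_imp_eq by blast
  qed
  then show ?thesis using Arg_bounded[of "- x / z"] by (auto simp: phi_def)
qed

lemma phi_cont: assumes "z \<in> S1" shows "continuous_on (S1 - {z}) (phi z)"
  unfolding phi_def
proof (intro continuous_intros)
  fix x assume x: "x \<in> S1 - {z}"
  show "- x / z \<notin> \<real>\<^sub>\<le>\<^sub>0"
  proof
    assume "- x / z \<in> \<real>\<^sub>\<le>\<^sub>0"
    moreover have "norm (- x / z) = 1" using assms x by (simp add: S1_iff norm_divide)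
    ultimately have "- x / z = -1" using unit_nonpos_real by blast
    then show False using assms x neg1_imp_eq by blast
  qed
qed (use assms in \<open>auto simp: S1_iff\<close>)

lemma phi_inj: "z \<in> S1 \<Longrightarrow> inj_on (phi z) S1"
  by (metis inj_onI psi_phi)

lemma phi_psi: assumes "z \<in> S1" "- pi < t" "t < pi" shows "phi z (psi z t) = t"
proof -
  have "z \<noteq> 0" using assms by (auto simp: S1_iff)
  then have "- (- z * cis t) / z = cis t" by simp
  then show ?thesis unfolding phi_def psi_def using Arg_cis[of t] assms by simp
qed

lemma psi_cont: "continuous_on UNIV (psi z)"
  unfolding psi_def by (intro continuous_intros)

lemma norm_cis_diff: "norm (cis s - cis t) \<le> \<bar>s - t\<bar>"
proof -
  have e: "cis t * cis (s - t) = cis s" by (simp add: cis_mult)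
  have "cis s - cis t = cis t * (cis (s - t) - 1)"
    unfolding right_diff_distrib e by simp
  then have "norm (cis s - cis t) = norm (exp (\<i> * of_real (s - t)) - 1)"
    by (simp add: norm_mult cis_conv_exp)
  also have "\<dots> = 2 * \<bar>sin ((s - t) / 2)\<bar>" by (rule dist_exp_i_1)
  also have "\<dots> \<le> 2 * \<bar>(s - t) / 2\<bar>" using abs_sin_x_le_abs_x[of "(s - t) / 2"] by simp
  finally show ?thesis by simp
qed

lemma psi_dist: assumes "z \<in> S1" shows "dist (psi z s) (psi z t) \<le> \<bar>s - t\<bar>"
proof -
  have "psi z s - psi z t = - z * (cis s - cis t)" by (simp add: psi_def algebra_simps)
  then have "dist (psi z s) (psi z t) = norm (cis s - cis t)"
    using assms by (simp add: dist_norm norm_mult S1_iff)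
  then show ?thesis using norm_cis_diff by simp
qed

lemma interval_prop:
  assumes z: "z \<in> S1" and A: "A \<subseteq> S1 - {z}" "connected A"
    and a: "a \<in> A" "a' \<in> A" and t: "phi z a \<le> t" "t \<le> phi z a'"
  shows "psi z t \<in> A"
proof -
  have "connected (phi z ` A)"
    by (rule connected_continuous_image[OF continuous_on_subset[OF phi_cont[OF z] A(1)] A(2)])
  then have "t \<in> phi z ` A" using connectedD_interval[of "phi z ` A" "phi z a" "phi z a'" t] a t by blast
  then obtain b where "b \<in> A" "t = phi z b" by auto
  then show ?thesis using psi_phi[OF z] A by auto
qed


definition Em :: "nat \<Rightarrow> complex set" where
  "Em m = (\<lambda>j. cis (2 * pi * real j / real m)) ` {..<m}"

lemma Em_S1: "Em m \<subseteq> S1"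
  by (auto simp: Em_def S1_iff)

lemma one_S1: "(1::complex) \<in> S1" by (simp add: S1_iff)

lemma one_Em: "m > 0 \<Longrightarrow> 1 \<in> Em m"
  unfolding Em_def by (rule image_eqI[of _ _ 0]) auto

lemma Em_finite: "finite (Em m)" by (simp add: Em_def)

lemma Em_card: "card (Em m) \<le> m"
  unfolding Em_def using card_image_le[of "{..<m}"] by simp

lemma cell_gap:
  assumes m: "m > 0" and C: "connected C" "C \<subseteq> S1 - Em m" and xy: "x \<in> C" "y \<in> C"
    and le: "phi 1 x \<le> phi 1 y"
  shows "phi 1 y - phi 1 x \<le> 2 * pi / m"
proof (rule ccontr)
  assume H: "\<not> ?thesis"
  define s where "s = phi 1 x"
  define t where "t = phi 1 y"
  have C1: "C \<subseteq> S1 - {1}" using C one_Em[OF m] by auto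
  have sb: "- pi < s" "s < pi" using phi_bounds[OF one_S1, of x] xy C1 by (auto simp: s_def)
  have tb: "- pi < t" "t < pi" using phi_bounds[OF one_S1, of y] xy C1 by (auto simp: t_def)
  define u where "u = (s + pi) * m / (2 * pi)"
  have u0: "u \<ge> 0" using sb m by (auto simp: u_def)
  define j where "j = nat (floor u)"
  have ju: "real j \<le> u" "u < real j + 1" using u0 by (auto simp: j_def)
  define c where "c = 2 * pi * (real j + 1) / m - pi"
  have mpos: "real m > 0" using m by simp
  have us: "2 * pi * u / m = s + pi" using mpos by (simp add: u_def field_simps)
  have "2 * pi * u / m < 2 * pi * (real j + 1) / m"
    using ju mpos by (intro divide_strict_right_mono mult_strict_left_mono) auto
  then have cs: "s < c" using us by (simp add: c_def)
  have "2 * pi * (real j + 1) / m \<le> 2 * pi * (u + 1) / m"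
    using ju mpos by (intro divide_right_mono mult_left_mono) auto
  also have "\<dots> = s + pi + 2 * pi / m" using mpos by (simp add: u_def field_simps)
  finally have "c \<le> s + 2 * pi / m" by (simp add: c_def)
  then have ct: "c < t" using H by (simp add: s_def t_def)
  have "psi 1 c \<in> C"
    using interval_prop[OF one_S1 C1 C(1) xy, of c] cs ct by (simp add: s_def t_def)
  moreover have "psi 1 c \<in> Em m"
  proof -
    have "2 * pi * (real j + 1) / m < 2 * pi" using ct tb by (simp add: c_def)
    then have "2 * pi * (real j + 1) < 2 * pi * real m" using mpos by (simp add: divide_less_eq)
    then have "real j + 1 < real m" using pi_gt_zero by (simp add: mult_less_cancel_left_pos)
    then have jm: "j + 1 < m" by linarith
    have "psi 1 c = cis (c + pi)" by (simp add: psi_def cis_mult[symmetric])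
    also have "c + pi = 2 * pi * real (j + 1) / real m" by (simp add: c_def)
    finally show ?thesis unfolding Em_def using jm by (intro image_eqI[of _ _ "j + 1"]) auto
  qed
  ultimately show False using C by auto
qed

lemma cell:
  assumes m: "m > 0" and C: "connected C" "C \<subseteq> S1 - Em m" and xy: "x \<in> C" "y \<in> C"
  shows "dist x y \<le> 2 * pi / m"
proof -
  have S: "x \<in> S1" "y \<in> S1" using C xy by auto
  have "dist x y = dist (psi 1 (phi 1 x)) (psi 1 (phi 1 y))" using psi_phi[OF one_S1] S by simp
  also have "\<dots> \<le> \<bar>phi 1 x - phi 1 y\<bar>" by (rule psi_dist[OF one_S1])
  also have "\<dots> \<le> 2 * pi / m"
    using cell_gap[OF m C xy] cell_gap[OF m C xy(2) xy(1)] by (cases "phi 1 x \<le> phi 1 y") auto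
  finally show ?thesis .
qed


lemma exists_min_real:
  fixes g :: "'a \<Rightarrow> real"
  assumes "finite T" "T \<noteq> {}" shows "\<exists>p\<in>T. \<forall>x\<in>T. g p \<le> g x"
proof -
  have "Min (g ` T) \<in> g ` T" using assms by simp
  then obtain p where p: "p \<in> T" "g p = Min (g ` T)" by auto
  have "g p \<le> g x" if "x \<in> T" for x
    using Min_le[OF finite_imageI[OF assms(1)] imageI[OF that, of g]] p by simp
  then show ?thesis using p by blast
qed

lemma exists_max_real:
  fixes g :: "'a \<Rightarrow> real"
  assumes "finite T" "T \<noteq> {}" shows "\<exists>p\<in>T. \<forall>x\<in>T. g x \<le> g p"
proof -
  have "Max (g ` T) \<in> g ` T" using assms by simp
  then obtain p where p: "p \<in> T" "g p = Max (g ` T)" by auto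
  have "g x \<le> g p" if "x \<in> T" for x
    using Max_ge[OF finite_imageI[OF assms(1)] imageI[OF that, of g]] p by simp
  then show ?thesis using p by blast
qed

locale circ =
  fixes f :: "complex \<Rightarrow> complex"
  assumes f_S1: "f ` S1 \<subseteq> S1" and f_inj: "inj_on f S1" and f_cont: "continuous_on S1 f"
begin

lemma iter_S1: "(f ^^ k) ` S1 \<subseteq> S1"
  by (induction k) (use f_S1 in auto)

lemma iter_S1': "x \<in> S1 \<Longrightarrow> (f ^^ k) x \<in> S1"
  using iter_S1 by auto

lemma iter_inj: "inj_on (f ^^ k) S1"
proof (induction k)
  case (Suc k)
  then show ?case using f_inj iter_S1 by (auto simp: inj_on_def iter_S1')
qed simp

lemma iter_cont: "continuous_on S1 (f ^^ k)"
proof (induction k)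
  case (Suc k)
  then show ?case
    using continuous_on_compose[OF Suc continuous_on_subset[OF f_cont iter_S1]] by simp
qed simp

lemma img_iter: "((\<lambda>A. f ` A) ^^ k) A = (f ^^ k) ` A"
  by (induction k) (auto simp: image_comp)

definition F :: "nat \<Rightarrow> nat \<Rightarrow> complex set" where
  "F m n = {x \<in> S1. \<exists>k<n. (f ^^ k) x \<in> Em m}"

lemma F_S1: "F m n \<subseteq> S1" by (auto simp: F_def)

lemma F_eq: "F m n = (\<Union>k\<in>{..<n}. {x \<in> S1. (f ^^ k) x \<in> Em m})"
  by (auto simp: F_def)

lemma F_piece: "finite {x \<in> S1. (f ^^ k) x \<in> Em m} \<and> card {x \<in> S1. (f ^^ k) x \<in> Em m} \<le> m"
proof -
  have inj: "inj_on (f ^^ k) {x \<in> S1. (f ^^ k) x \<in> Em m}"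
    using iter_inj by (rule inj_on_subset) auto
  have "(f ^^ k) ` {x \<in> S1. (f ^^ k) x \<in> Em m} \<subseteq> Em m" by auto
  then have "finite ((f ^^ k) ` {x \<in> S1. (f ^^ k) x \<in> Em m})" using Em_finite finite_subset by blast
  then have fin: "finite {x \<in> S1. (f ^^ k) x \<in> Em m}" using inj finite_imageD by blast
  have "card {x \<in> S1. (f ^^ k) x \<in> Em m} \<le> card (Em m)"
    using inj by (rule card_inj_on_le) (auto simp: Em_finite)
  then show ?thesis using fin Em_card[of m] by simp
qed

lemma F_finite: "finite (F m n)"
  unfolding F_eq using F_piece by auto

lemma F_card: "card (F m n) \<le> m * n"
proof -
  have "card (F m n) \<le> (\<Sum>k\<in>{..<n}. card {x \<in> S1. (f ^^ k) x \<in> Em m})"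
    unfolding F_eq by (rule card_UN_le) simp
  also have "\<dots> \<le> (\<Sum>k\<in>{..<n}. m)" by (rule sum_mono) (use F_piece in auto)
  finally show ?thesis by (simp add: mult.commute)
qed

lemma one_F: "m > 0 \<Longrightarrow> n > 0 \<Longrightarrow> 1 \<in> F m n"
  unfolding F_def using one_Em one_S1 by force

lemma conn_small:
  assumes m: "m > 0" and C: "connected C" "C \<subseteq> S1 - F m n" and k: "k < n"
    and xy: "x \<in> C" "y \<in> C"
  shows "dist ((f ^^ k) x) ((f ^^ k) y) \<le> 2 * pi / m"
proof (rule cell[OF m])
  show "connected ((f ^^ k) ` C)"
    using connected_continuous_image[OF continuous_on_subset[OF iter_cont] C(1)] C(2) by auto
  show "(f ^^ k) ` C \<subseteq> S1 - Em m"
    using C(2) k unfolding F_def by (auto intro!: iter_S1')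
qed (use xy in auto)

lemma seg:
  assumes z: "z \<in> S1" and m: "m > 0" and ab: "\<alpha> \<le> \<beta>"
    and avoid: "\<forall>t\<in>{\<alpha><..<\<beta>}. psi z t \<notin> F m n" and k: "k < n"
    and t1: "t1 \<in> {\<alpha>..\<beta>}" and t2: "t2 \<in> {\<alpha>..\<beta>}"
  shows "dist ((f ^^ k) (psi z t1)) ((f ^^ k) (psi z t2)) \<le> 2 * pi / m"
proof (cases "\<alpha> = \<beta>")
  case True
  then show ?thesis using t1 t2 m by simp
next
  case False
  then have lt: "\<alpha> < \<beta>" using ab by simp
  define G where "G = (\<lambda>t. (f ^^ k) (psi z t))"
  have Gc: "continuous_on UNIV G" unfolding G_def
    using continuous_on_compose[OF psi_cont continuous_on_subset[OF iter_cont[of k]]] psi_S1[OF z]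
    by (auto simp: o_def)
  have inner: "dist (G u1) (G u2) \<le> 2 * pi / m" if "u1 \<in> {\<alpha><..<\<beta>}" "u2 \<in> {\<alpha><..<\<beta>}" for u1 u2
    unfolding G_def
  proof (rule conn_small[OF m _ _ k])
    show "connected (psi z ` {\<alpha><..<\<beta>})"
      by (rule connected_continuous_image[OF continuous_on_subset[OF psi_cont]]) auto
    show "psi z ` {\<alpha><..<\<beta>} \<subseteq> S1 - F m n" using avoid psi_S1[OF z] by auto
  qed (use that in auto)
  have step1: "dist (G u1) (G u2) \<le> 2 * pi / m" if "u1 \<in> {\<alpha><..<\<beta>}" "u2 \<in> {\<alpha>..\<beta>}" for u1 u2
  proof (rule continuous_le_on_closure[where S = "{\<alpha><..<\<beta>}" and f = "\<lambda>t. dist (G u1) (G t)"])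
    show "continuous_on (closure {\<alpha><..<\<beta>}) (\<lambda>t. dist (G u1) (G t))"
      by (intro continuous_intros continuous_on_subset[OF Gc]) auto
    show "u2 \<in> closure {\<alpha><..<\<beta>}" using lt that by simp
  qed (use inner that in auto)
  have step2: "dist (G u1) (G u2) \<le> 2 * pi / m" if "u1 \<in> {\<alpha>..\<beta>}" "u2 \<in> {\<alpha>..\<beta>}" for u1 u2
  proof (rule continuous_le_on_closure[where S = "{\<alpha><..<\<beta>}" and f = "\<lambda>t. dist (G t) (G u2)"])
    show "continuous_on (closure {\<alpha><..<\<beta>}) (\<lambda>t. dist (G t) (G u2))"
      by (intro continuous_intros continuous_on_subset[OF Gc]) auto
    show "u1 \<in> closure {\<alpha><..<\<beta>}" using lt that by simp
  qed (use step1 that in auto)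
  show ?thesis using step2[OF t1 t2] by (simp add: G_def)
qed

end


lemma phi_one_one: "phi 1 1 = pi"
  by (simp add: phi_def Arg_eq_pi_iff)

lemma continua_D: "A \<in> continua_S1 \<Longrightarrow> A \<noteq> {} \<and> A \<subseteq> S1 \<and> connected A"
  by (auto simp: continua_S1_def)

context circ
begin

definition Dset :: "nat \<Rightarrow> nat \<Rightarrow> complex set \<Rightarrow> complex set" where
  "Dset m n A = {x \<in> F m n. \<exists>a\<in>A. phi 1 x < phi 1 a}"

lemma nox_gen:
  assumes m: "m > 0" and n: "n > 0"
    and A: "A \<in> continua_S1" and AF: "A \<inter> F m n = {}"
    and D: "Dset m n B \<subseteq> Dset m n A" and a: "a \<in> A" and b: "b \<in> B" "b \<in> S1" "b \<notin> F m n"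
    and x: "x \<in> F m n" and le: "phi 1 a \<le> phi 1 x" "phi 1 x \<le> phi 1 b"
  shows False
proof (cases "phi 1 x = phi 1 b")
  case True
  then have "x = b" using phi_inj[OF one_S1] x b F_S1 by (auto dest: inj_onD)
  then show False using x b by simp
next
  case False
  then have "phi 1 x < phi 1 b" using le by simp
  then have "x \<in> Dset m n B" using x b(1) unfolding Dset_def by blast
  then obtain a' where a': "a' \<in> A" "phi 1 x < phi 1 a'" using D unfolding Dset_def by auto
  have A1: "A \<subseteq> S1 - {1}" using continua_D[OF A] AF one_F[OF m n] by auto
  have "psi 1 (phi 1 x) \<in> A"
    using interval_prop[OF one_S1 A1 conjunct2[OF conjunct2[OF continua_D[OF A]]] a a'(1)] le a' by simp
  moreover have "psi 1 (phi 1 x) = x" using psi_phi[OF one_S1] x F_S1 by blast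
  ultimately have "x \<in> A" by simp
  then show False using AF x by auto
qed

lemma close_empty:
  assumes m: "m > 0" and k: "k < n"
    and A: "A \<in> continua_S1" and B: "B \<in> continua_S1"
    and AF: "A \<inter> F m n = {}" and BF: "B \<inter> F m n = {}"
    and D: "Dset m n A = Dset m n B" and a: "a \<in> A" and b: "b \<in> B"
  shows "dist ((f ^^ k) a) ((f ^^ k) b) \<le> 2 * pi / m"
proof -
  have n: "n > 0" using k by simp
  have aS: "a \<in> S1" "a \<noteq> 1" using a continua_D[OF A] AF one_F[OF m n] by auto
  have bS: "b \<in> S1" "b \<noteq> 1" using b continua_D[OF B] BF one_F[OF m n] by auto
  define s where "s = phi 1 a"
  define t where "t = phi 1 b"
  have sb: "- pi < s" "s < pi" using phi_bounds[OF one_S1 aS(1) aS(2)] by (auto simp: s_def)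
  have tb: "- pi < t" "t < pi" using phi_bounds[OF one_S1 bS(1) bS(2)] by (auto simp: t_def)
  have nox: "\<not> (min s t \<le> phi 1 x \<and> phi 1 x \<le> max s t)" if x: "x \<in> F m n" for x
  proof
    assume H: "min s t \<le> phi 1 x \<and> phi 1 x \<le> max s t"
    show False
    proof (cases "s \<le> t")
      case True
      then show False using nox_gen[OF m n A AF _ a b bS(1) _ x] D BF b H
        by (auto simp: s_def t_def)
    next
      case False
      then show False using nox_gen[OF m n B BF _ b a aS(1) _ x] D AF a H
        by (auto simp: s_def t_def)
    qed
  qed
  have avoid: "\<forall>\<tau>\<in>{min s t<..<max s t}. psi 1 \<tau> \<notin> F m n"
  proof (intro ballI notI)
    fix \<tau> assume \<tau>: "\<tau> \<in> {min s t<..<max s t}" and inF: "psi 1 \<tau> \<in> F m n"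
    have "phi 1 (psi 1 \<tau>) = \<tau>" using \<tau> sb tb by (intro phi_psi[OF one_S1]) auto
    then show False using nox[OF inF] \<tau> by auto
  qed
  have "dist ((f ^^ k) (psi 1 s)) ((f ^^ k) (psi 1 t)) \<le> 2 * pi / m"
    by (rule seg[OF one_S1 m _ avoid k]) auto
  then show ?thesis using psi_phi[OF one_S1] aS bS by (simp add: s_def t_def)
qed

lemma close_full:
  assumes m: "m > 0" and k: "k < n" and FB: "F m n \<subseteq> B" and a: "a \<in> S1" "a \<notin> F m n"
  shows "\<exists>b\<in>B. dist ((f ^^ k) a) ((f ^^ k) b) \<le> 2 * pi / m"
proof -
  have n: "n > 0" using k by simp
  define s where "s = phi 1 a"
  have a1: "a \<noteq> 1" using a one_F[OF m n] by auto
  have sb: "- pi < s" "s < pi" using phi_bounds[OF one_S1 a(1) a1] by (auto simp: s_def)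
  define T where "T = {x \<in> F m n. s < phi 1 x}"
  have "1 \<in> T" using one_F[OF m n] sb by (auto simp: T_def phi_one_one)
  then obtain p where p: "p \<in> T" "\<forall>x\<in>T. phi 1 p \<le> phi 1 x"
    using exists_min_real[of T "phi 1"] F_finite by (auto simp: T_def)
  have pF: "p \<in> F m n" "s < phi 1 p" using p by (auto simp: T_def)
  have avoid: "\<forall>\<tau>\<in>{s<..<phi 1 p}. psi 1 \<tau> \<notin> F m n"
  proof (intro ballI notI)
    fix \<tau> assume \<tau>: "\<tau> \<in> {s<..<phi 1 p}" and inF: "psi 1 \<tau> \<in> F m n"
    have pb: "phi 1 p \<le> pi" using Arg_bounded by (simp add: phi_def)
    have "phi 1 (psi 1 \<tau>) = \<tau>" using \<tau> sb pb by (intro phi_psi[OF one_S1]) auto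
    then have "psi 1 \<tau> \<in> T" using inF \<tau> by (auto simp: T_def)
    then show False using p(2) \<tau> \<open>phi 1 (psi 1 \<tau>) = \<tau>\<close> by fastforce
  qed
  have "dist ((f ^^ k) (psi 1 s)) ((f ^^ k) (psi 1 (phi 1 p))) \<le> 2 * pi / m"
    by (rule seg[OF one_S1 m _ avoid k]) (use pF in auto)
  moreover have "psi 1 (phi 1 p) = p" using psi_phi[OF one_S1] pF F_S1 by auto
  moreover have "psi 1 s = a" using psi_phi[OF one_S1 a(1)] by (simp add: s_def)
  ultimately show ?thesis using FB pF by auto
qed


lemma close_mid:
  assumes m: "m > 0" and k: "k < n" and A: "A \<in> continua_S1"
    and z: "z \<in> F m n" "z \<notin> A" and a: "a \<in> A" "a \<notin> F m n" and q: "q \<in> A" "q \<in> F m n"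
    and AB: "A \<inter> F m n \<subseteq> B"
  shows "\<exists>b\<in>B. dist ((f ^^ k) a) ((f ^^ k) b) \<le> 2 * pi / m"
proof -
  have zS: "z \<in> S1" using z F_S1 by auto
  have Ac: "A \<subseteq> S1" "connected A" using continua_D[OF A] by auto
  have A1: "A \<subseteq> S1 - {z}" using Ac z by auto
  have aS: "a \<in> S1" "a \<noteq> z" using a A1 by auto
  have qS: "q \<in> S1" "q \<noteq> z" using q A1 by auto
  define s where "s = phi z a"
  define r where "r = phi z q"
  have sb: "- pi < s" "s < pi" using phi_bounds[OF zS aS] by (auto simp: s_def)
  have rb: "- pi < r" "r < pi" using phi_bounds[OF zS qS] by (auto simp: r_def)
  have "s \<noteq> r"
  proof
    assume "s = r"
    then have "a = q" using phi_inj[OF zS] aS qS by (auto simp: s_def r_def dest: inj_onD)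
    then show False using a q by simp
  qed
  then consider "s < r" | "r < s" by linarith
  then show ?thesis
  proof cases
    case 1
    define T where "T = {x \<in> F m n. s < phi z x \<and> phi z x \<le> r}"
    have "q \<in> T" using q 1 by (auto simp: T_def r_def)
    then obtain p where p: "p \<in> T" "\<forall>x\<in>T. phi z p \<le> phi z x"
      using exists_min_real[of T "phi z"] F_finite by (auto simp: T_def)
    have pF: "p \<in> F m n" "s < phi z p" "phi z p \<le> r" using p by (auto simp: T_def)
    have pp: "psi z (phi z p) = p" using psi_phi[OF zS] pF F_S1 by blast
    have "psi z (phi z p) \<in> A"
      by (rule interval_prop[OF zS A1 Ac(2) a(1) q(1)]) (use pF in \<open>auto simp: s_def r_def\<close>)
    then have pB: "p \<in> B" using pp pF AB by auto
    have avoid: "\<forall>\<tau>\<in>{s<..<phi z p}. psi z \<tau> \<notin> F m n"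
    proof (intro ballI notI)
      fix \<tau> assume \<tau>: "\<tau> \<in> {s<..<phi z p}" and inF: "psi z \<tau> \<in> F m n"
      have e: "phi z (psi z \<tau>) = \<tau>" using \<tau> sb rb pF by (intro phi_psi[OF zS]) auto
      then have "psi z \<tau> \<in> T" using inF \<tau> pF by (auto simp: T_def)
      then show False using p(2) \<tau> e by fastforce
    qed
    have "dist ((f ^^ k) (psi z s)) ((f ^^ k) (psi z (phi z p))) \<le> 2 * pi / m"
      by (rule seg[OF zS m _ avoid k]) (use pF in auto)
    moreover have "psi z s = a" using psi_phi[OF zS aS(1)] by (simp add: s_def)
    ultimately show ?thesis using pB pp by auto
  next
    case 2
    define T where "T = {x \<in> F m n. r \<le> phi z x \<and> phi z x < s}"
    have "q \<in> T" using q 2 by (auto simp: T_def r_def)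
    then obtain p where p: "p \<in> T" "\<forall>x\<in>T. phi z x \<le> phi z p"
      using exists_max_real[of T "phi z"] F_finite by (auto simp: T_def)
    have pF: "p \<in> F m n" "r \<le> phi z p" "phi z p < s" using p by (auto simp: T_def)
    have pp: "psi z (phi z p) = p" using psi_phi[OF zS] pF F_S1 by blast
    have "psi z (phi z p) \<in> A"
      by (rule interval_prop[OF zS A1 Ac(2) q(1) a(1)]) (use pF in \<open>auto simp: s_def r_def\<close>)
    then have pB: "p \<in> B" using pp pF AB by auto
    have avoid: "\<forall>\<tau>\<in>{phi z p<..<s}. psi z \<tau> \<notin> F m n"
    proof (intro ballI notI)
      fix \<tau> assume \<tau>: "\<tau> \<in> {phi z p<..<s}" and inF: "psi z \<tau> \<in> F m n"
      have e: "phi z (psi z \<tau>) = \<tau>" using \<tau> sb rb pF by (intro phi_psi[OF zS]) auto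
      then have "psi z \<tau> \<in> T" using inF \<tau> pF by (auto simp: T_def)
      then show False using p(2) \<tau> e by fastforce
    qed
    have "dist ((f ^^ k) (psi z s)) ((f ^^ k) (psi z (phi z p))) \<le> 2 * pi / m"
      by (rule seg[OF zS m _ avoid k]) (use pF in auto)
    moreover have "psi z s = a" using psi_phi[OF zS aS(1)] by (simp add: s_def)
    ultimately show ?thesis using pB pp by auto
  qed
qed

definition sig :: "nat \<Rightarrow> nat \<Rightarrow> complex set \<Rightarrow> complex set \<times> complex set" where
  "sig m n A = (A \<inter> F m n, Dset m n A)"

lemma close:
  assumes m: "m > 0" and k: "k < n" and A: "A \<in> continua_S1" and B: "B \<in> continua_S1"
    and sg: "sig m n A = sig m n B" and a: "a \<in> A"
  shows "\<exists>b\<in>B. dist ((f ^^ k) a) ((f ^^ k) b) \<le> 2 * pi / m"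
proof -
  have eqF: "A \<inter> F m n = B \<inter> F m n" and eqD: "Dset m n A = Dset m n B"
    using sg by (auto simp: sig_def)
  show ?thesis
  proof (cases "a \<in> F m n")
    case True
    then have "a \<in> B" using eqF a by blast
    then show ?thesis using m by (intro bexI[of _ a]) auto
  next
    case aF: False
    show ?thesis
    proof (cases "A \<inter> F m n = {}")
      case True
      obtain b where "b \<in> B" using continua_D[OF B] by auto
      then show ?thesis using close_empty[OF m k A B True _ eqD a] True eqF by auto
    next
      case False
      then obtain q where q: "q \<in> A" "q \<in> F m n" by auto
      show ?thesis
      proof (cases "F m n \<subseteq> A")
        case True
        then have "F m n \<subseteq> B" using eqF by auto
        then show ?thesis using close_full[OF m k _ _ aF] a continua_D[OF A] by auto
      next
        case False
        then obtain z where "z \<in> F m n" "z \<notin> A" by auto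
        then show ?thesis using close_mid[OF m k A _ _ a aF q, of z B] eqF by auto
      qed
    qed
  qed
qed

end

lemma hd_le:
  assumes "A \<noteq> {}" "B \<noteq> {}" "\<forall>a\<in>A. \<exists>b\<in>B. dist a b \<le> c" "\<forall>b\<in>B. \<exists>a\<in>A. dist b a \<le> c"
  shows "hausdorff_dist A B \<le> c"
proof -
  have 1: "infdist a B \<le> c" if "a \<in> A" for a
    using assms(3) that infdist_le order.trans by metis
  have 2: "infdist b A \<le> c" if "b \<in> B" for b
    using assms(4) that infdist_le order.trans by metis
  have "(SUP a\<in>A. infdist a B) \<le> c" using 1 assms(1) by (intro cSUP_least) auto
  moreover have "(SUP b\<in>B. infdist b A) \<le> c" using 2 assms(2) by (intro cSUP_least) auto
  ultimately show ?thesis by (simp add: hausdorff_dist_def)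
qed


context circ
begin

definition Ssets :: "nat \<Rightarrow> nat \<Rightarrow> complex set set" where
  "Ssets m n = insert (F m n) (insert {} ((\<lambda>(z, p, q). {x \<in> F m n. phi z p \<le> phi z x \<and> phi z x \<le> phi z q})
      ` (F m n \<times> F m n \<times> F m n)))"

definition Dsets :: "nat \<Rightarrow> nat \<Rightarrow> complex set set" where
  "Dsets m n = insert {} ((\<lambda>q. {x \<in> F m n. phi 1 x \<le> phi 1 q}) ` F m n)"

lemma Ssets_finite: "finite (Ssets m n)"
  by (simp add: Ssets_def F_finite)

lemma Dsets_finite: "finite (Dsets m n)"
  by (simp add: Dsets_def F_finite)

lemma ins_le: "finite X \<Longrightarrow> card (insert x X) \<le> Suc (card X)"
  by (simp add: card_insert_if)

lemma Ssets_card: "card (Ssets m n) \<le> card (F m n) ^ 3 + 2"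
proof -
  define X where "X = (\<lambda>(z, p, q). {x \<in> F m n. phi z p \<le> phi z x \<and> phi z x \<le> phi z q})
      ` (F m n \<times> F m n \<times> F m n)"
  have fX: "finite X" unfolding X_def using F_finite by simp
  have "card (Ssets m n) = card (insert (F m n) (insert {} X))" by (simp add: Ssets_def X_def)
  also have "\<dots> \<le> Suc (card (insert {} X))" using fX by (intro ins_le) simp
  also have "\<dots> \<le> Suc (Suc (card X))" using ins_le[OF fX, of "{}"] by simp
  also have "card X \<le> card (F m n \<times> F m n \<times> F m n)"
    unfolding X_def by (rule card_image_le) (simp add: F_finite)
  also have "card (F m n \<times> F m n \<times> F m n) = card (F m n) ^ 3"
    by (simp add: card_cartesian_product power3_eq_cube)
  finally show ?thesis by simp
qed

lemma Dsets_card: "card (Dsets m n) \<le> card (F m n) + 1"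
proof -
  have "card (Dsets m n) \<le> Suc (card ((\<lambda>q. {x \<in> F m n. phi 1 x \<le> phi 1 q}) ` F m n))"
    unfolding Dsets_def by (rule ins_le) (simp add: F_finite)
  also have "\<dots> \<le> Suc (card (F m n))" using card_image_le[OF F_finite] by auto
  finally show ?thesis by simp
qed

lemma S_in:
  assumes A: "A \<in> continua_S1" shows "A \<inter> F m n \<in> Ssets m n"
proof (cases "A \<inter> F m n = F m n \<or> A \<inter> F m n = {}")
  case True
  then show ?thesis by (auto simp: Ssets_def)
next
  case False
  then obtain z where z: "z \<in> F m n" "z \<notin> A" by auto
  have ne: "A \<inter> F m n \<noteq> {}" using False by auto
  have fin: "finite (A \<inter> F m n)" using F_finite by auto
  obtain p where p: "p \<in> A \<inter> F m n" "\<forall>x\<in>A \<inter> F m n. phi z p \<le> phi z x"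
    using exists_min_real[OF fin ne] by blast
  obtain q where q: "q \<in> A \<inter> F m n" "\<forall>x\<in>A \<inter> F m n. phi z x \<le> phi z q"
    using exists_max_real[OF fin ne] by blast
  have zS: "z \<in> S1" using z F_S1 by auto
  have Ac: "A \<subseteq> S1" "connected A" using continua_D[OF A] by auto
  have A1: "A \<subseteq> S1 - {z}" using Ac z by auto
  have eq: "A \<inter> F m n = {x \<in> F m n. phi z p \<le> phi z x \<and> phi z x \<le> phi z q}"
  proof
    show "A \<inter> F m n \<subseteq> {x \<in> F m n. phi z p \<le> phi z x \<and> phi z x \<le> phi z q}" using p q by auto
  next
    show "{x \<in> F m n. phi z p \<le> phi z x \<and> phi z x \<le> phi z q} \<subseteq> A \<inter> F m n"
    proof
      fix x assume x: "x \<in> {x \<in> F m n. phi z p \<le> phi z x \<and> phi z x \<le> phi z q}"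
      have "psi z (phi z x) \<in> A"
        using interval_prop[OF zS A1 Ac(2), of p q "phi z x"] p q x by auto
      moreover have "psi z (phi z x) = x" using psi_phi[OF zS] x F_S1 by blast
      ultimately show "x \<in> A \<inter> F m n" using x by auto
    qed
  qed
  have "{x \<in> F m n. phi z p \<le> phi z x \<and> phi z x \<le> phi z q} \<in>
      (\<lambda>(z, p, q). {x \<in> F m n. phi z p \<le> phi z x \<and> phi z x \<le> phi z q}) ` (F m n \<times> F m n \<times> F m n)"
    by (rule image_eqI[of _ _ "(z, p, q)"]) (use z p q in auto)
  then show ?thesis unfolding Ssets_def eq by blast
qed

lemma D_in: "Dset m n A \<in> Dsets m n"
proof (cases "Dset m n A = {}")
  case True
  then show ?thesis by (simp add: Dsets_def)
next
  case False
  have fin: "finite (Dset m n A)" using F_finite by (simp add: Dset_def)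
  obtain q where q: "q \<in> Dset m n A" "\<forall>x\<in>Dset m n A. phi 1 x \<le> phi 1 q"
    using exists_max_real[OF fin False] by blast
  have "Dset m n A = {x \<in> F m n. phi 1 x \<le> phi 1 q}"
  proof
    show "Dset m n A \<subseteq> {x \<in> F m n. phi 1 x \<le> phi 1 q}" using q by (auto simp: Dset_def)
  next
    show "{x \<in> F m n. phi 1 x \<le> phi 1 q} \<subseteq> Dset m n A"
    proof
      fix x assume x: "x \<in> {x \<in> F m n. phi 1 x \<le> phi 1 q}"
      obtain a where a: "a \<in> A" "phi 1 q < phi 1 a" using q(1) unfolding Dset_def by blast
      then have "phi 1 x < phi 1 a" using x by simp
      then show "x \<in> Dset m n A" using x a(1) unfolding Dset_def by blast
    qed
  qed
  then show ?thesis unfolding Dsets_def using q(1) by (auto simp: Dset_def)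
qed

lemma sep_bound:
  assumes m: "m > 0" and eps: "2 * pi / m \<le> \<epsilon>"
    and E: "separated_set hausdorff_dist (\<lambda>A. f ` A) continua_S1 n \<epsilon> E"
  shows "card E \<le> (card (F m n) ^ 3 + 2) * (card (F m n) + 1)"
proof -
  have Esub: "E \<subseteq> continua_S1" using E by (simp add: separated_set_def)
  have inj: "inj_on (sig m n) E"
  proof (rule inj_onI, rule ccontr)
    fix A B assume A: "A \<in> E" and B: "B \<in> E" and sg: "sig m n A = sig m n B" and ne: "A \<noteq> B"
    obtain k where k: "k < n" and gt: "hausdorff_dist (((\<lambda>A. f ` A) ^^ k) A) (((\<lambda>A. f ` A) ^^ k) B) > \<epsilon>"
      using E A B ne unfolding separated_set_def by blast
    have Ac: "A \<in> continua_S1" and Bc: "B \<in> continua_S1" using A B Esub by auto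
    have "hausdorff_dist ((f ^^ k) ` A) ((f ^^ k) ` B) \<le> 2 * pi / m"
    proof (rule hd_le)
      show "(f ^^ k) ` A \<noteq> {}" "(f ^^ k) ` B \<noteq> {}" using continua_D[OF Ac] continua_D[OF Bc] by auto
      show "\<forall>a\<in>(f ^^ k) ` A. \<exists>b\<in>(f ^^ k) ` B. dist a b \<le> 2 * pi / m"
      proof
        fix a' assume "a' \<in> (f ^^ k) ` A"
        then obtain a where a: "a \<in> A" "a' = (f ^^ k) a" by blast
        obtain b where "b \<in> B" "dist ((f ^^ k) a) ((f ^^ k) b) \<le> 2 * pi / m"
          using close[OF m k Ac Bc sg a(1)] by blast
        then show "\<exists>b\<in>(f ^^ k) ` B. dist a' b \<le> 2 * pi / m" using a by blast
      qed
      show "\<forall>b\<in>(f ^^ k) ` B. \<exists>a\<in>(f ^^ k) ` A. dist b a \<le> 2 * pi / m"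
      proof
        fix b' assume "b' \<in> (f ^^ k) ` B"
        then obtain b where b: "b \<in> B" "b' = (f ^^ k) b" by blast
        obtain a where "a \<in> A" "dist ((f ^^ k) b) ((f ^^ k) a) \<le> 2 * pi / m"
          using close[OF m k Bc Ac sg[symmetric] b(1)] by blast
        then show "\<exists>a\<in>(f ^^ k) ` A. dist b' a \<le> 2 * pi / m" using b by blast
      qed
    qed
    then show False using gt eps by (simp add: img_iter)
  qed
  have "sig m n ` E \<subseteq> Ssets m n \<times> Dsets m n"
    using Esub S_in D_in by (auto simp: sig_def)
  then have "card E \<le> card (Ssets m n \<times> Dsets m n)"
    using inj by (intro card_inj_on_le) (auto simp: Ssets_finite Dsets_finite)
  also have "\<dots> = card (Ssets m n) * card (Dsets m n)" by (rule card_cartesian_product)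
  also have "\<dots> \<le> (card (F m n) ^ 3 + 2) * (card (F m n) + 1)"
    using Ssets_card Dsets_card by (rule mult_le_mono)
  finally show ?thesis .
qed

lemma sep_bound2:
  assumes m: "m > 0" and eps: "2 * pi / m \<le> \<epsilon>"
    and E: "separated_set hausdorff_dist (\<lambda>A. f ` A) continua_S1 n \<epsilon> E"
  shows "card E \<le> ((m * n) ^ 3 + 2) * (m * n + 1)"
proof -
  have c: "card (F m n) \<le> m * n" by (rule F_card)
  then have "card (F m n) ^ 3 \<le> (m * n) ^ 3" by (rule power_mono) simp
  then have "(card (F m n) ^ 3 + 2) * (card (F m n) + 1) \<le> ((m * n) ^ 3 + 2) * (m * n + 1)"
    using c by (intro mult_le_mono) auto
  then show ?thesis using sep_bound[OF assms] by linarith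
qed

end


lemma cont_from_cis:
  fixes h :: "complex \<Rightarrow> complex"
  assumes g: "\<And>t. isCont (\<lambda>s. h (cis s)) t"
  shows "continuous_on S1 h"
  unfolding continuous_on_eq_continuous_within
proof
  fix x assume x: "x \<in> S1"
  define g where "g = (\<lambda>s. h (cis s))"
  show "continuous (at x within S1) h"
  proof (cases "x = -1")
    case False
    have "x \<notin> \<real>\<^sub>\<le>\<^sub>0" using unit_nonpos_real[of x] x False by (auto simp: S1_iff)
    then have "continuous (at x within S1) Arg" by (rule continuous_within_Arg)
    then have c: "continuous (at x within S1) (\<lambda>y. g (Arg y))"
      by (intro continuous_within_compose3[where g=g and f=Arg and x=x and s=S1]) (use g in \<open>auto simp: g_def\<close>)
    show ?thesis
    proof (rule continuous_transform_within[OF c zero_less_one x])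
      fix y assume "y \<in> S1"
      then show "g (Arg y) = h y" by (simp add: g_def cis_Arg_norm1 S1_iff)
    qed
  next
    case True
    have "- x \<notin> \<real>\<^sub>\<le>\<^sub>0" using True by simp
    then have "continuous (at x within S1) (\<lambda>y. Arg (- y))"
      by (intro continuous_within_compose3[where g=Arg and f="\<lambda>y. - y" and x=x and s=S1] continuous_at_Arg)
        (auto intro: continuous_intros)
    then have "continuous (at x within S1) (\<lambda>y. Arg (- y) + pi)"
      by (intro continuous_intros)
    then have c: "continuous (at x within S1) (\<lambda>y. g (Arg (- y) + pi))"
      by (intro continuous_within_compose3[where g=g and f="\<lambda>y. Arg (- y) + pi" and x=x and s=S1]) (use g in \<open>auto simp: g_def\<close>)
    show ?thesis
    proof (rule continuous_transform_within[OF c zero_less_one x])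
      fix y assume y: "y \<in> S1"
      have "cis (Arg (- y) + pi) = cis (Arg (- y)) * cis pi" by (rule cis_mult[symmetric])
      also have "\<dots> = y" using y by (simp add: cis_Arg_norm1 S1_iff)
      finally show "g (Arg (- y) + pi) = h y" by (simp add: g_def)
    qed
  qed
qed

lemma S1_continuum: "S1 \<in> continua_S1"
  unfolding continua_S1_def S1_def
  by (auto intro!: connected_sphere simp: compact_sphere)

lemma lim_aux: fixes M :: real assumes "M > 0"
  shows "(\<lambda>n::nat. ln (((M * real n)^3 + 2) * (M * real n + 1)) / real n) \<longlonglongrightarrow> 0"
  using assms by real_asymp

context circ
begin

lemma limsup_zero:
  assumes eps: "\<epsilon> > 0"
  shows "limsup (\<lambda>n. SUP E\<in>{E. finite E \<and> separated_set hausdorff_dist (\<lambda>A. f ` A) continua_S1 n \<epsilon> E}.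
            ereal (ln (real (card E)) / real n)) = 0" (is "limsup ?a = 0")
proof (rule antisym)
  define m where "m = nat (ceiling (2 * pi / \<epsilon>)) + 1"
  have m: "m > 0" by (simp add: m_def)
  have "2 * pi / \<epsilon> \<le> real m" unfolding m_def by linarith
  then have "2 * pi \<le> \<epsilon> * real m" using eps by (simp add: divide_le_eq mult.commute)
  then have meps: "2 * pi / m \<le> \<epsilon>" using m by (simp add: divide_le_eq mult.commute)
  define P where "P = (\<lambda>n::nat. ((real m * real n)^3 + 2) * (real m * real n + 1))"
  have P1: "P n \<ge> 1" for n
  proof -
    have a: "1 \<le> (real m * real n)^3 + 2" and b: "1 \<le> real m * real n + 1" by auto
    show ?thesis unfolding P_def using mult_mono[OF a b] a by simp
  qed
  have bound: "?a n \<le> ereal (ln (P n) / real n)" for n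
  proof (rule SUP_least)
    fix E assume "E \<in> {E. finite E \<and> separated_set hausdorff_dist (\<lambda>A. f ` A) continua_S1 n \<epsilon> E}"
    then have E: "separated_set hausdorff_dist (\<lambda>A. f ` A) continua_S1 n \<epsilon> E" by auto
    have "card E \<le> ((m * n) ^ 3 + 2) * (m * n + 1)" by (rule sep_bound2[OF m meps E])
    then have "real (card E) \<le> real (((m * n) ^ 3 + 2) * (m * n + 1))" by (simp only: of_nat_le_iff)
    also have "\<dots> = P n" by (simp only: P_def of_nat_mult of_nat_add of_nat_power of_nat_numeral of_nat_1)
    finally have cE: "real (card E) \<le> P n" .
    have "ln (real (card E)) \<le> ln (P n)"
    proof (cases "card E = 0")
      case True
      then show ?thesis using P1[of n] by simp
    next
      case False
      then show ?thesis using cE by (subst ln_le_cancel_iff) auto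
    qed
    then have "ln (real (card E)) / real n \<le> ln (P n) / real n"
      by (rule divide_right_mono) simp
    then show "ereal (ln (real (card E)) / real n) \<le> ereal (ln (P n) / real n)" by simp
  qed
  have "limsup ?a \<le> limsup (\<lambda>n. ereal (ln (P n) / real n))"
    by (rule Limsup_mono) (use bound in auto)
  also have "\<dots> = ereal 0"
  proof (rule lim_imp_Limsup)
    show "((\<lambda>n. ereal (ln (P n) / real n)) \<longlongrightarrow> ereal 0) sequentially"
      unfolding lim_ereal P_def using lim_aux[of "real m"] m by simp
  qed simp
  finally show "limsup ?a \<le> 0" by (simp add: zero_ereal_def)
next
  have "0 \<le> ?a n" for n
  proof -
    have "{S1} \<in> {E. finite E \<and> separated_set hausdorff_dist (\<lambda>A. f ` A) continua_S1 n \<epsilon> E}"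
      using S1_continuum by (auto simp: separated_set_def)
    then have "ereal (ln (real (card {S1})) / real n) \<le> ?a n" by (rule SUP_upper)
    then show ?thesis by (simp add: zero_ereal_def)
  qed
  then show "0 \<le> limsup ?a" by (intro le_Limsup) auto
qed

end

theorem theorem5p2:
  fixes f :: "complex \<Rightarrow> complex"
  assumes "morse_smale_circle f"
  shows "topological_entropy hausdorff_dist (\<lambda>A. f ` A) continua_S1 = 0"
proof -
  have d: "C1_circle_diffeo f" using assms by (simp add: morse_smale_circle_def)
  then have bij: "bij_betw f S1 S1" and c1: "C1_circle_map f" by (auto simp: C1_circle_diffeo_def)
  obtain h' where h': "\<forall>t. ((\<lambda>s. f (cis s)) has_vector_derivative h' t) (at t)"
    using c1 by (auto simp: C1_circle_map_def)
  have "continuous_on S1 f"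
    by (rule cont_from_cis) (use h' has_vector_derivative_continuous in blast)
  then interpret circ f using bij by unfold_locales (auto simp: bij_betw_def)
  have "topological_entropy hausdorff_dist (\<lambda>A. f ` A) continua_S1 = (SUP \<epsilon>\<in>{0::real<..}. (0::ereal))"
    unfolding topological_entropy_def by (rule SUP_cong) (auto simp: limsup_zero)
  also have "\<dots> = 0" by simp
  finally show ?thesis .
qed

end
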